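(* In $A_n$, for $1\le i\le n-1$ and $a\in\mathbb{N}_0$, \[ \omega_{i+1}^a = x_{i+1}T_i\,\omega_i^a\,T_i - T_i\,\omega_i^a\,T_i\,x_i . \]
   Context: $A_n$ is the bigraded $\mathbb{Z}$-superalgebra generated by even $x_1,\dots,x_n$, even $T_1,\dots,T_{n-1}$ and odd $\omega_1,\dots,\omega_n$ with relations: $T_i^2=0$, $T_iT_j=T_jT_i$ ($|i-j|>1$), $T_iT_{i+1}T_i=T_{i+1}T_iT_{i+1}$, $x_ix_j=x_jx_i$, $T_ix_j=x_jT_i$ ($j\neq i,i+1$), $T_ix_i-x_{i+1}T_i=1$, $T_ix_{i+1}-x_iT_i=-1$, $\omega_i\omega_j=-\omega_j\omega_i$, $x_i\omega_j=\omega_jx_i$, $T_i\omega_j=\omega_jT_i$ ($i\ne j$), $T_i(\omega_i-x_{i+1}\omega_{i+1})=(\omega_i-x_{i+1}\omega_{i+1})T_i$ (equivalently, operators on $\mathbb{Z}[x]\otimes\bigwedge^\bullet(\omega)$ generated by Demazure operators and multiplications). Labeled elements: $\omega_k^0=\omega_k$, $\omega_0^a=0$, $\omega_k^a=\omega_{k-1}^{a-1}-x_k\omega_k^{a-1}$ for $a\ge1$. *)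

theory Defs
  imports Main
begin

text \<open>We state identities in A_n
  via its universal property: an identity holds in A_n iff it holds for every ring
  (Z-algebra) with elements x_1..x_n, T_1..T_(n-1), w_1..w_n satisfying the defining
  relations.  Generators are indexed from 1; values at other indices are irrelevant.\<close>

definition A_rels :: "nat \<Rightarrow> (nat \<Rightarrow> 'a::ring_1) \<Rightarrow> (nat \<Rightarrow> 'a) \<Rightarrow> (nat \<Rightarrow> 'a) \<Rightarrow> bool" where
  "A_rels n x T w \<longleftrightarrow>
     (\<forall>i\<in>{1..<n}. T i * T i = 0)
   \<and> (\<forall>i\<in>{1..<n}. \<forall>j\<in>{1..<n}. (i + 1 < j \<or> j + 1 < i) \<longrightarrow> T i * T j = T j * T i)
   \<and> (\<forall>i. 1 \<le> i \<and> i + 1 < n \<longrightarrow> T i * T (i+1) * T i = T (i+1) * T i * T (i+1))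
   \<and> (\<forall>i\<in>{1..n}. \<forall>j\<in>{1..n}. x i * x j = x j * x i)
   \<and> (\<forall>i\<in>{1..<n}. \<forall>j\<in>{1..n}. j \<noteq> i \<and> j \<noteq> i + 1 \<longrightarrow> T i * x j = x j * T i)
   \<and> (\<forall>i\<in>{1..<n}. T i * x i - x (i+1) * T i = 1)
   \<and> (\<forall>i\<in>{1..<n}. T i * x (i+1) - x i * T i = -1)
   \<and> (\<forall>i\<in>{1..n}. \<forall>j\<in>{1..n}. w i * w j = - (w j * w i))
   \<and> (\<forall>i\<in>{1..n}. \<forall>j\<in>{1..n}. x i * w j = w j * x i)
   \<and> (\<forall>i\<in>{1..<n}. \<forall>j\<in>{1..n}. i \<noteq> j \<longrightarrow> T i * w j = w j * T i)
   \<and> (\<forall>i\<in>{1..<n}. T i * (w i - x (i+1) * w (i+1)) = (w i - x (i+1) * w (i+1)) * T i)"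

fun omega_lab :: "(nat \<Rightarrow> 'a::ring_1) \<Rightarrow> (nat \<Rightarrow> 'a) \<Rightarrow> nat \<Rightarrow> nat \<Rightarrow> 'a" where
  "omega_lab x w k 0 = (if k = 0 then 0 else w k)"
| "omega_lab x w k (Suc a) =
     (if k = 0 then 0 else omega_lab x w (k - 1) a - x k * omega_lab x w k a)"

end

theory Submission
  imports Defs
begin

lemma comm_x:
  fixes x T w :: "nat \<Rightarrow> 'a::ring_1"
  assumes R: "A_rels n x T w" and k: "k \<le> n" and j: "j \<in> {1..n}"
  shows "x j * omega_lab x w k a = omega_lab x w k a * x j"
  using k
proof (induction a arbitrary: k)
  case 0
  then show ?case using R j unfolding A_rels_def by auto
next
  case (Suc a)
  show ?case
  proof (cases "k = 0")
    case True then show ?thesis by simp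
  next
    case False
    have xx: "x j * x k = x k * x j" using R j False Suc.prems unfolding A_rels_def by auto
    have I1: "x j * omega_lab x w (k-1) a = omega_lab x w (k-1) a * x j" using Suc by auto
    have I2: "x j * omega_lab x w k a = omega_lab x w k a * x j" using Suc by auto
    have "x j * (x k * omega_lab x w k a) = x k * omega_lab x w k a * x j"
      by (metis I2 xx mult.assoc)
    then show ?thesis using False I1 by (simp add: algebra_simps)
  qed
qed

lemma comm_T:
  fixes x T w :: "nat \<Rightarrow> 'a::ring_1"
  assumes R: "A_rels n x T w" and k: "k < i" and i: "i < n"
  shows "T i * omega_lab x w k a = omega_lab x w k a * T i"
  using k
proof (induction a arbitrary: k)
  case 0
  then show ?case using R i unfolding A_rels_def by auto
next
  case (Suc a)
  show ?case
  proof (cases "k = 0")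
    case True then show ?thesis by simp
  next
    case False
    have xx: "T i * x k = x k * T i" using R i False Suc.prems unfolding A_rels_def by auto
    have I1: "T i * omega_lab x w (k-1) a = omega_lab x w (k-1) a * T i" using Suc by auto
    have I2: "T i * omega_lab x w k a = omega_lab x w k a * T i" using Suc by auto
    have "T i * (x k * omega_lab x w k a) = x k * omega_lab x w k a * T i"
      by (metis I2 xx mult.assoc)
    then show ?thesis using False I1 by (simp add: algebra_simps)
  qed
qed

theorem lemma2p4:
  fixes x T w :: "nat \<Rightarrow> 'a::ring_1" and n i a :: nat
  assumes "A_rels n x T w"
    and "1 \<le> i" and "i \<le> n - 1"
  shows "omega_lab x w (i+1) a
         = x (i+1) * T i * omega_lab x w i a * T i - T i * omega_lab x w i a * T i * x i"
proof -
  note R = assms(1)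
  have i1: "i \<in> {1..<n}" using assms by auto
  have tt: "T i * T i = 0" using R i1 unfolding A_rels_def by auto
  have r1: "T i * x i - x (i+1) * T i = 1" using R i1 unfolding A_rels_def by auto
  have r2: "T i * x (i+1) - x i * T i = -1" using R i1 unfolding A_rels_def by auto
  have r2': "T i * x (i+1) = x i * T i - 1" using r2 by (simp add: algebra_simps eq_neg_iff_add_eq_0)
  have r1': "T i * x i = 1 + x (i+1) * T i" using r1 by (simp add: algebra_simps)
  show ?thesis
  proof (induction a)
    case 0
    define u where "u = w i - x (i+1) * w (i+1)"
    have uc: "T i * u = u * T i" using R i1 unfolding A_rels_def u_def by auto
    have wc: "T i * w (i+1) = w (i+1) * T i" using R i1 unfolding A_rels_def by auto
    have xw1: "x (i+1) * w (i+1) = w (i+1) * x (i+1)" using R i1 unfolding A_rels_def by auto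
    have xw2: "x i * w (i+1) = w (i+1) * x i" using R i1 unfolding A_rels_def by auto
    have wi: "w i = u + x (i+1) * w (i+1)" unfolding u_def by simp
    have a1: "T i * u * T i = 0" by (metis uc tt mult.assoc mult_zero_right)
    have a2: "T i * (x (i+1) * w (i+1)) * T i = T i * x (i+1) * T i * w (i+1)"
      by (metis wc mult.assoc)
    have a3: "T i * x (i+1) * T i = - T i"
    proof -
      have "T i * x (i+1) * T i = (x i * T i - 1) * T i" using r2' by simp
      also have "\<dots> = x i * (T i * T i) - T i" by (simp add: algebra_simps)
      finally show ?thesis using tt by simp
    qed
    have h1: "T i * w i * T i = - (T i * w (i+1))"
    proof -
      have "T i * w i * T i = T i * u * T i + T i * (x (i+1) * w (i+1)) * T i"
        unfolding wi by (simp add: distrib_left distrib_right)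
      also have "\<dots> = (- T i) * w (i+1)" using a1 a2 a3 by simp
      finally show ?thesis by simp
    qed
    have "x (i+1) * T i * w i * T i - T i * w i * T i * x i
        = - (x (i+1) * (T i * w (i+1))) + T i * w (i+1) * x i"
      using h1 by (simp add: mult.assoc)
    also have "\<dots> = (T i * x i - x (i+1) * T i) * w (i+1)"
      using xw2 by (simp add: algebra_simps mult.assoc)
    also have "\<dots> = w (i+1)" using r1 by simp
    finally show ?case using assms(2) by simp
  next
    case (Suc a)
    define y where "y = omega_lab x w i a"
    define z where "z = omega_lab x w (i-1) a"
    have zc: "T i * z = z * T i" unfolding z_def using comm_T[OF R, of "i-1" i] assms by auto
    have yx1: "x (i+1) * y = y * x (i+1)" unfolding y_def using comm_x[OF R, of i "i+1"] assms by auto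
    have yx0: "x i * y = y * x i" unfolding y_def using comm_x[OF R, of i i] assms by auto
    have s1: "omega_lab x w (i+1) (Suc a) = y - x (i+1) * (x (i+1) * T i * y * T i - T i * y * T i * x i)"
      using Suc assms(2) by (simp add: y_def)
    have s2: "omega_lab x w i (Suc a) = z - x i * y" using assms(2) by (simp add: y_def z_def)
    have d0: "x (i+1) * T i * z * T i - T i * z * T i * x i = 0"
      by (metis zc tt mult.assoc mult_zero_left mult_zero_right diff_self)
    have e1: "T i * (x i * y) = y + x (i+1) * T i * y"
      by (metis r1' distrib_right mult.assoc mult_1_left)
    have e2: "y * T i * x i = y + y * x (i+1) * T i"
      by (metis r1' distrib_left mult.assoc mult_1_right)
    have "x (i+1) * T i * (z - x i * y) * T i - T i * (z - x i * y) * T i * x i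
        = (x (i+1) * T i * z * T i - T i * z * T i * x i)
          - (x (i+1) * (T i * (x i * y)) * T i - (T i * (x i * y)) * T i * x i)"
      by (simp add: algebra_simps)
    also have "\<dots> = - (x (i+1) * (y + x (i+1) * T i * y) * T i - (y + x (i+1) * T i * y) * T i * x i)"
      using d0 e1 by simp
    also have "\<dots> = - (x (i+1) * y * T i - y * T i * x i)
         - x (i+1) * (x (i+1) * T i * y * T i - T i * y * T i * x i)"
      by (simp add: algebra_simps)
    also have "\<dots> = - (x (i+1) * y * T i - (y + y * x (i+1) * T i))
         - x (i+1) * (x (i+1) * T i * y * T i - T i * y * T i * x i)"
      using e2 by simp
    also have "\<dots> = y - x (i+1) * (x (i+1) * T i * y * T i - T i * y * T i * x i)"
      using yx1 by (simp add: algebra_simps)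
    finally show ?case using s1 s2 by simp
  qed
qed

end
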